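(* Let $(X,E,\ell)$ be a weighted tree with similarity matrix $Z=(e^{-d(x,y)})_{x,y\in X}$. Then $Z$ is invertible and for $x,y\in X$ with $x\neq y$: $$Z^{-1}(x,x)=1+\sum_{e\ni x}\frac{e^{-2\ell(e)}}{1-e^{-2\ell(e)}},$$ $Z^{-1}(x,y)=0$ if $x$ and $y$ are not adjacent, and if $e=\{x,y\}\in E$, $$Z^{-1}(x,y)=-\frac{e^{-\ell(e)}}{1-e^{-2\ell(e)}}.$$
   Context: A weighted tree is a triple $(X,E,\ell)$ where $(X,E)$ is a finite simple undirected graph that is a tree, and $\ell\colon E\to(0,\infty)$ assigns lengths to edges. Its vertex set $X$ is a metric space with $d(x,y)$ the total length of the unique simple path from $x$ to $y$. The sum $\sum_{e\ni x}$ is over edges containing $x$. *)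

theory Defs
  imports "HOL-Analysis.Analysis"
begin

text \<open>Graphs on the vertex set UNIV of a finite type; edges are 2-element sets.\<close>

definition is_walk_edges :: "'a set set \<Rightarrow> 'a list \<Rightarrow> bool" where
  "is_walk_edges E p \<longleftrightarrow> (\<forall>i. Suc i < length p \<longrightarrow> {p ! i, p ! Suc i} \<in> E)"

definition simple_path :: "'a set set \<Rightarrow> 'a \<Rightarrow> 'a \<Rightarrow> 'a list \<Rightarrow> bool" where
  "simple_path E x y p \<longleftrightarrow> p \<noteq> [] \<and> hd p = x \<and> last p = y \<and> distinct p \<and> is_walk_edges E p"

definition simple_graph :: "'a set set \<Rightarrow> bool" where
  "simple_graph E \<longleftrightarrow> (\<forall>e\<in>E. \<exists>x y. x \<noteq> y \<and> e = {x, y})"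

definition graph_connected :: "'a set set \<Rightarrow> bool" where
  "graph_connected E \<longleftrightarrow> (\<forall>x y. \<exists>p. simple_path E x y p)"

definition graph_acyclic :: "'a set set \<Rightarrow> bool" where
  "graph_acyclic E \<longleftrightarrow> \<not> (\<exists>p. length p \<ge> 3 \<and> distinct p \<and> is_walk_edges E p \<and> {last p, hd p} \<in> E)"

definition weighted_tree :: "'a set set \<Rightarrow> ('a set \<Rightarrow> real) \<Rightarrow> bool" where
  "weighted_tree E l \<longleftrightarrow> simple_graph E \<and> graph_connected E \<and> graph_acyclic E \<and> (\<forall>e\<in>E. l e > 0)"

definition path_length :: "('a set \<Rightarrow> real) \<Rightarrow> 'a list \<Rightarrow> real" where
  "path_length l p = (\<Sum>i<length p - 1. l {p ! i, p ! Suc i})"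

definition tree_dist :: "'a set set \<Rightarrow> ('a set \<Rightarrow> real) \<Rightarrow> 'a \<Rightarrow> 'a \<Rightarrow> real" where
  "tree_dist E l x y = path_length l (THE p. simple_path E x y p)"

definition similarity_matrix :: "'a set set \<Rightarrow> ('a set \<Rightarrow> real) \<Rightarrow> real ^ 'a ^ 'a" where
  "similarity_matrix E l = (\<chi> x y. exp (- tree_dist E l x y))"

end

theory Submission
  imports Defs
begin

lemma walk_Nil[simp]: "is_walk_edges E []"
  by (simp add: is_walk_edges_def)

lemma walk_single[simp]: "is_walk_edges E [x]"
  by (simp add: is_walk_edges_def)

lemma walk_Cons2[simp]: "is_walk_edges E (x # y # xs) \<longleftrightarrow> {x, y} \<in> E \<and> is_walk_edges E (y # xs)"
proof
  assume h: "is_walk_edges E (x # y # xs)"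
  have "{x,y} \<in> E" using h[unfolded is_walk_edges_def, rule_format, of 0] by simp
  moreover have "is_walk_edges E (y # xs)"
    unfolding is_walk_edges_def
  proof (intro allI impI)
    fix i assume "Suc i < length (y # xs)"
    then show "{(y # xs) ! i, (y # xs) ! Suc i} \<in> E"
      using h[unfolded is_walk_edges_def, rule_format, of "Suc i"] by simp
  qed
  ultimately show "{x, y} \<in> E \<and> is_walk_edges E (y # xs)" by blast
next
  assume h: "{x, y} \<in> E \<and> is_walk_edges E (y # xs)"
  show "is_walk_edges E (x # y # xs)"
    unfolding is_walk_edges_def
  proof (intro allI impI)
    fix i assume i: "Suc i < length (x # y # xs)"
    show "{(x # y # xs) ! i, (x # y # xs) ! Suc i} \<in> E"
    proof (cases i)
      case 0 then show ?thesis using h by simp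
    next
      case (Suc j)
      then show ?thesis using h[THEN conjunct2, unfolded is_walk_edges_def, rule_format, of j] i by simp
    qed
  qed
qed

lemma walk_append:
  "is_walk_edges E (xs @ ys) \<longleftrightarrow> is_walk_edges E xs \<and> is_walk_edges E ys \<and>
     (xs \<noteq> [] \<and> ys \<noteq> [] \<longrightarrow> {last xs, hd ys} \<in> E)"
proof (induction xs rule: induct_list012)
  case 1 then show ?case by simp
next
  case (2 x) then show ?case by (cases ys) auto
next
  case (3 x y zs) then show ?case by auto
qed

lemma walk_split:
  assumes "is_walk_edges E (p1 @ b # p2)"
  shows "is_walk_edges E (p1 @ [b]) \<and> is_walk_edges E (b # p2)"
  using assms by (simp add: walk_append)

lemma path_length_Nil[simp]: "path_length l [] = 0"
  by (simp add: path_length_def)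

lemma path_length_snoc:
  assumes "xs \<noteq> []"
  shows "path_length l (xs @ [a]) = path_length l xs + l {last xs, a}"
proof -
  obtain n where n: "length xs = Suc n" using assms by (cases xs) auto
  have "path_length l (xs @ [a]) = (\<Sum>i<Suc n. l {(xs@[a]) ! i, (xs@[a]) ! Suc i})"
    unfolding path_length_def using n by simp
  also have "\<dots> = (\<Sum>i<n. l {(xs@[a]) ! i, (xs@[a]) ! Suc i}) + l {(xs@[a]) ! n, (xs@[a]) ! Suc n}"
    by simp
  also have "(\<Sum>i<n. l {(xs@[a]) ! i, (xs@[a]) ! Suc i}) = (\<Sum>i<n. l {xs ! i, xs ! Suc i})"
    using n by (intro sum.cong) (auto simp: nth_append)
  also have "\<dots> = path_length l xs" unfolding path_length_def using n by simp
  also have "(xs@[a]) ! n = last xs" using n assms by (simp add: nth_append last_conv_nth)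
  also have "(xs@[a]) ! Suc n = a" using n by (simp add: nth_append)
  finally show ?thesis .
qed

lemma distinct_hd_last:
  assumes "p \<noteq> []" "distinct p" "hd p = last p"
  shows "p = [hd p]"
proof (cases p)
  case Nil then show ?thesis using assms by simp
next
  case (Cons a ps)
  show ?thesis
  proof (cases ps)
    case Nil then show ?thesis using Cons by simp
  next
    case (Cons b bs)
    then have "last ps \<in> set ps" by simp
    moreover have "last ps = a" using assms \<open>p = a # ps\<close> Cons by simp
    ultimately show ?thesis using assms \<open>p = a # ps\<close> by simp
  qed
qed

lemma no_cycle:
  assumes "graph_acyclic E" "simple_path E u v r" "length r \<ge> 3"
  shows "{v, u} \<notin> E"
  using assms unfolding graph_acyclic_def simple_path_def by blast

lemma path_unique:
  assumes acyc: "graph_acyclic E"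
  shows "simple_path E x y q \<Longrightarrow> simple_path E x y p \<Longrightarrow> p = q"
proof (induction q arbitrary: p y rule: rev_induct)
  case Nil then show ?case by (simp add: simple_path_def)
next
  case (snoc a q0)
  note sq = snoc.prems(1) and sp = snoc.prems(2)
  have ya: "y = a" using sq by (simp add: simple_path_def)
  show ?case
  proof (cases "q0 = []")
    case True
    then have "x = y" using sq by (auto simp: simple_path_def)
    then have "p = [x]" using sp distinct_hd_last[of p] by (auto simp: simple_path_def)
    then show ?thesis using True ya \<open>x = y\<close> by simp
  next
    case False
    define b where "b = last q0"
    have q0path: "simple_path E x b q0"
      using sq False by (auto simp: simple_path_def b_def walk_append)
    have eby: "{b, y} \<in> E" using sq False by (auto simp: simple_path_def b_def walk_append ya)
    have bny: "b \<noteq> y" using sq False by (auto simp: simple_path_def b_def ya)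
    show ?thesis
    proof (cases "b \<in> set p")
      case True
      then obtain p1 p2 where p12: "p = p1 @ b # p2" by (meson split_list)
      have "simple_path E x b (p1 @ [b])"
        using sp p12 walk_split[of E p1 b p2] by (cases p1) (auto simp: simple_path_def)
      then have e1: "p1 @ [b] = q0" using snoc.IH q0path by blast
      have sp2: "simple_path E b y (b # p2)"
        using sp p12 walk_split[of E p1 b p2] by (cases p1) (auto simp: simple_path_def)
      show ?thesis
      proof (cases p2)
        case Nil then show ?thesis using sp2 bny by (simp add: simple_path_def)
      next
        case (Cons c cs)
        show ?thesis
        proof (cases cs)
          case Nil
          then have "c = y" using sp2 Cons by (simp add: simple_path_def)
          then show ?thesis using p12 e1 Cons Nil ya by simp
        next
          case (Cons d ds)
          then have "length (b # p2) \<ge> 3" using \<open>p2 = c # cs\<close> by simp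
          then have "{y, b} \<notin> E" using no_cycle[OF acyc sp2] by blast
          then show ?thesis using eby by (simp add: insert_commute)
        qed
      qed
    next
      case False
      have "simple_path E x b (p @ [b])"
        using sp False eby by (auto simp: simple_path_def walk_append insert_commute)
      then have "p @ [b] = q0" using snoc.IH q0path by blast
      then have "q0 @ [a] = p @ [b, y]" using ya by simp
      moreover have "y \<in> set p" using sp by (auto simp: simple_path_def)
      ultimately have "\<not> distinct (q0 @ [a])" by auto
      then show ?thesis using sq by (auto simp: simple_path_def)
    qed
  qed
qed

lemma tree_dist_eq:
  assumes "weighted_tree E l" "simple_path E x y p"
  shows "tree_dist E l x y = path_length l p"
proof -
  have "(THE p. simple_path E x y p) = p"
    using assms path_unique[of E x y] by (intro the_equality) (auto simp: weighted_tree_def)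
  then show ?thesis by (simp add: tree_dist_def)
qed

lemma tree_dist_self:
  assumes "weighted_tree E l"
  shows "tree_dist E l x x = 0"
proof -
  have "simple_path E x x [x]" by (simp add: simple_path_def)
  then show ?thesis using tree_dist_eq[OF assms] by (simp add: path_length_def)
qed

lemma tree_dist_edge:
  assumes "weighted_tree E l" "{x, y} \<in> E" "x \<noteq> y"
  shows "tree_dist E l x y = l {x, y}"
proof -
  have "simple_path E x y [x, y]" using assms by (simp add: simple_path_def)
  then show ?thesis using tree_dist_eq[OF assms(1)] by (simp add: path_length_def)
qed

lemma edge_ne:
  assumes "weighted_tree E l" "{y, z} \<in> E"
  shows "y \<noteq> z"
proof
  assume "y = z"
  then have "{z} \<in> E" using assms by simp
  then obtain a b where "a \<noteq> b" "{z} = {a, b}" using assms(1)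
    unfolding weighted_tree_def simple_graph_def by blast
  then show False by (metis insertI1 insert_commute singletonD)
qed

lemma neighbor_dist:
  assumes wt: "weighted_tree E l" and xz: "x \<noteq> z"
  shows "\<exists>y0. {y0, z} \<in> E \<and> tree_dist E l x y0 = tree_dist E l x z - l {y0, z} \<and>
     (\<forall>y. {y, z} \<in> E \<and> y \<noteq> y0 \<longrightarrow> tree_dist E l x y = tree_dist E l x z + l {y, z})"
proof -
  have acyc: "graph_acyclic E" using wt by (simp add: weighted_tree_def)
  obtain p where p: "simple_path E x z p"
    using wt unfolding weighted_tree_def graph_connected_def by blast
  then have "p \<noteq> []" by (simp add: simple_path_def)
  then obtain p0 where p0: "p = p0 @ [z]" using p
    by (metis append_butlast_last_id simple_path_def)
  have p0ne: "p0 \<noteq> []" using p p0 xz by (auto simp: simple_path_def)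
  define y0 where "y0 = last p0"
  have sp0: "simple_path E x y0 p0" using p p0 p0ne by (auto simp: simple_path_def y0_def walk_append)
  have e0: "{y0, z} \<in> E" using p p0 p0ne by (auto simp: simple_path_def y0_def walk_append)
  have d: "tree_dist E l x z = tree_dist E l x y0 + l {y0, z}"
    using tree_dist_eq[OF wt p] tree_dist_eq[OF wt sp0] p0 p0ne path_length_snoc y0_def by simp
  have rest: "tree_dist E l x y = tree_dist E l x z + l {y, z}" if ey: "{y, z} \<in> E" and yy0: "y \<noteq> y0" for y
  proof -
    have yz: "y \<noteq> z" using edge_ne[OF wt ey] .
    have ynp0: "y \<notin> set p0"
    proof
      assume "y \<in> set p0"
      then obtain p1 p2 where p12: "p0 = p1 @ y # p2" by (meson split_list)
      have p2ne: "p2 \<noteq> []" using p12 yy0 y0_def by auto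
      have spc: "simple_path E y z (y # p2 @ [z])"
        using p p0 p12 p2ne walk_split[of E p1 y "p2 @ [z]"] by (cases p1) (auto simp: simple_path_def)
      have "length (y # p2 @ [z]) \<ge> 3" using p2ne by (cases p2) auto
      then have "{z, y} \<notin> E" using no_cycle[OF acyc spc] by blast
      then show False using ey by (simp add: insert_commute)
    qed
    have "simple_path E x y (p @ [y])"
      using p p0 p0ne ynp0 yz ey by (auto simp: simple_path_def walk_append insert_commute hd_append)
    then have "tree_dist E l x y = path_length l p + l {z, y}"
      using tree_dist_eq[OF wt] path_length_snoc[of p l y] p p0 by simp
    then show ?thesis using tree_dist_eq[OF wt p] by (simp add: insert_commute)
  qed
  show ?thesis using e0 d rest by (intro exI[of _ y0]) auto
qed


lemma edges_at:
  assumes wt: "weighted_tree E l"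
  shows "{e\<in>E. z \<in> e} = (\<lambda>y. {y, z}) ` {y. {y, z} \<in> E}"
    and "inj_on (\<lambda>y. {y, z}) {y. {y, z} \<in> E}"
proof -
  show "{e\<in>E. z \<in> e} = (\<lambda>y. {y, z}) ` {y. {y, z} \<in> E}"
  proof (intro set_eqI iffI)
    fix e assume e: "e \<in> {e\<in>E. z \<in> e}"
    then obtain a b where ab: "a \<noteq> b" "e = {a, b}" using wt
      unfolding weighted_tree_def simple_graph_def by blast
    show "e \<in> (\<lambda>y. {y, z}) ` {y. {y, z} \<in> E}"
    proof (cases "z = a")
      case True then show ?thesis using e ab by (auto simp: insert_commute intro!: image_eqI[of _ _ b])
    next
      case False then have "z = b" using e ab by auto
      then show ?thesis using e ab by (auto intro!: image_eqI[of _ _ a])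
    qed
  qed auto
  show "inj_on (\<lambda>y. {y, z}) {y. {y, z} \<in> E}"
    using edge_ne[OF wt] by (auto simp: inj_on_def doubleton_eq_iff)
qed

lemma key_algebra:
  fixes t :: real assumes "t > 0"
  shows "1 + exp (- 2 * t) / (1 - exp (- 2 * t)) - exp t * (exp (- t) / (1 - exp (- 2 * t))) = 0"
proof -
  have e2: "exp (- 2 * t) = exp (- t) * exp (- t)" by (subst exp_add[symmetric]) simp
  have "exp (- t) < 1" using assms by simp
  moreover have "exp (- t) > 0" by simp
  ultimately have "exp (- t) * exp (- t) < 1"
    by (metis less_trans mult_strict_right_mono mult_1_left)
  then have ne: "1 - exp (- 2 * t) \<noteq> 0" using e2 by simp
  have "exp t * exp (- t) = 1" by (simp add: exp_minus)
  then show ?thesis using ne by (simp add: field_simps)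
qed

lemma exp_g:
  fixes t :: real
  shows "exp (- t) * (exp (- t) / (1 - exp (- 2 * t))) = exp (- 2 * t) / (1 - exp (- 2 * t))"
proof -
  have e2: "exp (- 2 * t) = exp (- t) * exp (- t)" by (subst exp_add[symmetric]) simp
  show ?thesis unfolding e2 by simp
qed

lemma product_id:
  fixes E :: "('a::finite) set set" and l :: "'a set \<Rightarrow> real"
  assumes wt: "weighted_tree E l"
  defines "Z \<equiv> similarity_matrix E l"
  defines "W \<equiv> (\<chi> y z. if y = z then 1 + (\<Sum>e\<in>{e\<in>E. z \<in> e}. exp (- 2 * l e) / (1 - exp (- 2 * l e)))
     else if {y, z} \<in> E then - (exp (- l {y, z}) / (1 - exp (- 2 * l {y, z}))) else 0) :: real^'a^'a"
  shows "Z ** W = mat 1"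
proof -
  have "(Z ** W) $ x $ z = mat 1 $ x $ z" for x z
  proof -
    define N where "N = {y. {y, z} \<in> E}"
    define f where "f = (\<lambda>t::real. exp (- 2 * t) / (1 - exp (- 2 * t)))"
    define g where "g = (\<lambda>t::real. exp (- t) / (1 - exp (- 2 * t)))"
    define S where "S = (\<Sum>y\<in>N. f (l {y, z}))"
    have zN: "z \<notin> N" using edge_ne[OF wt, of z z] by (auto simp: N_def)
    have Ssum: "(\<Sum>e\<in>{e\<in>E. z \<in> e}. exp (- 2 * l e) / (1 - exp (- 2 * l e))) = S"
      unfolding edges_at(1)[OF wt] S_def N_def f_def
      by (subst sum.reindex[OF edges_at(2)[OF wt]]) simp
    have Wy: "W $ y $ z = (if y = z then 1 + S else 0) + (if y \<in> N then - g (l {y, z}) else 0)" for y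
      using zN Ssum by (auto simp: W_def N_def g_def)
    have Zxy: "Z $ x $ y = exp (- tree_dist E l x y)" for y by (simp add: Z_def similarity_matrix_def)
    have "(Z ** W) $ x $ z = (\<Sum>y\<in>UNIV. Z $ x $ y * W $ y $ z)"
      by (simp add: matrix_matrix_mult_def)
    also have "\<dots> = (\<Sum>y\<in>UNIV. (if y = z then Z $ x $ y * (1 + S) else 0))
        + (\<Sum>y\<in>UNIV. (if y \<in> N then Z $ x $ y * (- g (l {y, z})) else 0))"
    proof -
      have "Z $ x $ y * W $ y $ z = (if y = z then Z $ x $ y * (1 + S) else 0)
        + (if y \<in> N then Z $ x $ y * (- g (l {y, z})) else 0)" for y
        unfolding Wy by (simp add: distrib_left)
      then show ?thesis by (simp only: sum.distrib)
    qed
    also have "\<dots> = Z $ x $ z * (1 + S) + (\<Sum>y\<in>N. Z $ x $ y * (- g (l {y, z})))"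
      by (simp add: sum.inter_restrict[symmetric])
    finally have P: "(Z ** W) $ x $ z = Z $ x $ z * (1 + S) + (\<Sum>y\<in>N. Z $ x $ y * (- g (l {y, z})))" .
    show ?thesis
    proof (cases "x = z")
      case True
      have "(\<Sum>y\<in>N. Z $ x $ y * (- g (l {y, z}))) = - S"
        unfolding S_def sum_negf[symmetric]
      proof (intro sum.cong refl)
        fix y assume "y \<in> N"
        then have "{z, y} \<in> E" "z \<noteq> y" using edge_ne[OF wt] by (auto simp: N_def insert_commute)
        then have "tree_dist E l x y = l {y, z}" using tree_dist_edge[OF wt] True by (simp add: insert_commute)
        then show "Z $ x $ y * (- g (l {y, z})) = - f (l {y, z})"
          using exp_g[of "l {y, z}"] by (simp add: Zxy f_def g_def)
      qed
      moreover have "Z $ x $ z = 1" using Zxy[of z] True by (simp add: tree_dist_self[OF wt])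
      ultimately show ?thesis using P True by (simp add: mat_def)
    next
      case False
      obtain y0 where y0: "{y0, z} \<in> E" "tree_dist E l x y0 = tree_dist E l x z - l {y0, z}"
        "\<And>y. {y, z} \<in> E \<Longrightarrow> y \<noteq> y0 \<Longrightarrow> tree_dist E l x y = tree_dist E l x z + l {y, z}"
        using neighbor_dist[OF wt False] by blast
      define D where "D = tree_dist E l x z"
      have y0N: "y0 \<in> N" using y0 by (simp add: N_def)
      have l0: "l {y0, z} > 0" using y0 wt by (simp add: weighted_tree_def)
      define S' where "S' = (\<Sum>y\<in>N - {y0}. f (l {y, z}))"
      have SS: "S = f (l {y0, z}) + S'" unfolding S_def S'_def
        using y0N by (simp add: sum.remove)
      have "(\<Sum>y\<in>N. Z $ x $ y * (- g (l {y, z})))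
          = Z $ x $ y0 * (- g (l {y0, z})) + (\<Sum>y\<in>N - {y0}. Z $ x $ y * (- g (l {y, z})))"
        using y0N by (simp add: sum.remove)
      also have "(\<Sum>y\<in>N - {y0}. Z $ x $ y * (- g (l {y, z}))) = - exp (- D) * S'"
        unfolding S'_def sum_distrib_left
      proof (intro sum.cong refl)
        fix y assume "y \<in> N - {y0}"
        then have "tree_dist E l x y = D + l {y, z}" using y0(3) by (simp add: N_def D_def)
        then have "Z $ x $ y = exp (- D) * exp (- l {y, z})" by (simp add: Zxy exp_add[symmetric])
        then show "Z $ x $ y * (- g (l {y, z})) = - exp (- D) * f (l {y, z})"
          using exp_g[of "l {y, z}"] by (simp add: f_def g_def)
      qed
      also have "Z $ x $ y0 = exp (- D) * exp (l {y0, z})"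
        using y0(2) by (simp add: Zxy D_def exp_add[symmetric])
      finally have "(Z ** W) $ x $ z = exp (- D) * (1 + S) + (exp (- D) * exp (l {y0, z}) * (- g (l {y0, z})) + - exp (- D) * S')"
        using P by (simp add: Zxy D_def)
      also have "\<dots> = exp (- D) * (1 + f (l {y0, z}) - exp (l {y0, z}) * g (l {y0, z}))"
        unfolding SS by (simp add: algebra_simps)
      also have "\<dots> = 0" using key_algebra[OF l0] by (simp add: f_def g_def)
      finally show ?thesis using False by (simp add: mat_def)
    qed
  qed
  then show ?thesis by (simp add: vec_eq_iff)
qed

theorem proposition4p1:
  fixes E :: "('a::finite) set set" and l :: "'a set \<Rightarrow> real"
  assumes "weighted_tree E l"
  defines "Z \<equiv> similarity_matrix E l"
  shows "invertible Z
    \<and> (\<forall>x. matrix_inv Z $ x $ x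
           = 1 + (\<Sum>e\<in>{e\<in>E. x \<in> e}. exp (- 2 * l e) / (1 - exp (- 2 * l e))))
    \<and> (\<forall>x y. x \<noteq> y \<and> {x, y} \<notin> E \<longrightarrow> matrix_inv Z $ x $ y = 0)
    \<and> (\<forall>x y. x \<noteq> y \<and> {x, y} \<in> E \<longrightarrow>
           matrix_inv Z $ x $ y = - (exp (- l {x, y}) / (1 - exp (- 2 * l {x, y}))))"
proof -
  define W where "W \<equiv> (\<chi> y z. if y = z then 1 + (\<Sum>e\<in>{e\<in>E. z \<in> e}. exp (- 2 * l e) / (1 - exp (- 2 * l e)))
     else if {y, z} \<in> E then - (exp (- l {y, z}) / (1 - exp (- 2 * l {y, z}))) else 0) :: real^'a^'a"
  have ZW: "Z ** W = mat 1" using product_id[OF assms(1)] unfolding Z_def W_def .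
  then have WZ: "W ** Z = mat 1" using matrix_left_right_inverse by blast
  have inv: "invertible Z" using ZW WZ unfolding invertible_def by blast
  have "Z ** matrix_inv Z = mat 1 \<and> matrix_inv Z ** Z = mat 1"
    unfolding matrix_inv_def by (rule someI[of _ W]) (use ZW WZ in blast)
  then have "matrix_inv Z = matrix_inv Z ** (Z ** W)" using ZW by simp
  also have "\<dots> = (matrix_inv Z ** Z) ** W" by (simp add: matrix_mul_assoc)
  also have "\<dots> = W" using \<open>Z ** matrix_inv Z = mat 1 \<and> matrix_inv Z ** Z = mat 1\<close> by simp
  finally have MI: "matrix_inv Z = W" .
  show ?thesis using inv unfolding MI W_def by simp
qed

end
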